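(* Let $f\in C^1([0,1],\mathbb{R})$ satisfy $f(0)=f(1)=0$, $f(s)>0$ for all $s\in(0,1)$, $f'(1)<0$, and suppose there exist $s_0\in(0,1)$, $K\ge 0$, $\alpha>0$ and $r>0$ such that $$f(s)\le r\frac{s}{(1+|\ln s|)^\alpha}\ \text{ for all } s\in(0,1),\qquad f(s)\ge r\frac{s}{(1+|\ln s|)^\alpha}(1-Ks)\ \text{ for all } s\in(0,s_0].$$ Let $u_0:\mathbb{R}\to[0,1]$ be uniformly continuous with $u_0>0$ on $\mathbb{R}$, $\liminf_{x\to-\infty}u_0(x)>0$ and $\lim_{x\to+\infty}u_0(x)=0$. Let $\beta>0$ satisfy $\beta\ge \frac{1}{\alpha+1}$, and assume there exist $x_0>0$ and $\mu>0$ such that $u_0(x)\lesssim e^{-\mu x^\beta}$ for all $x\ge x_0$ (i.e. $u_0(x)\le Ce^{-\mu x^\beta}$ for some constant $C>0$ and all $x\ge x_0$). Let $u$ be the solution of $u_t=u_{xx}+f(u)$ for $t>0$, $x\in\mathbb{R}$, with $u(0,\cdot)=u_0$. Then for every $\lambda\in(0,1)$ there exist positive constants $\Gamma$ and $c$ and a time $T_\lambda$ such that $$\Gamma<\frac{x_\lambda(t)}{t}<c\quad\text{for all } t>T_\lambda.$$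
   Context: For $\lambda\in(0,1)$ and $t\ge 0$, $E_\lambda(t):=\{x\in\mathbb{R}: u(t,x)\ge\lambda\}$ is the upper level set of $u(t,\cdot)$ and $x_\lambda(t):=\sup E_\lambda(t)$. *)

theory Defs
  imports "HOL-Analysis.Analysis"
begin

definition C1_on_unit :: "(real \<Rightarrow> real) \<Rightarrow> (real \<Rightarrow> real) \<Rightarrow> bool" where
  "C1_on_unit f f' \<longleftrightarrow>
     (\<forall>s\<in>{0..1}. (f has_real_derivative f' s) (at s within {0..1})) \<and>
     continuous_on {0..1} f'"

text \<open>Classical solution u(t,x) of u_t = u_xx + f(u) on (0,oo) x R with u(0,.) = u0,
  taking values in [0,1] (the range of f).\<close>
definition is_solution :: "(real \<Rightarrow> real) \<Rightarrow> (real \<Rightarrow> real) \<Rightarrow> (real \<Rightarrow> real \<Rightarrow> real) \<Rightarrow> bool" where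
  "is_solution f u0 u \<longleftrightarrow>
     continuous_on ({0..} \<times> UNIV) (\<lambda>(t, x). u t x) \<and>
     (\<forall>x. u 0 x = u0 x) \<and>
     (\<forall>t\<ge>0. \<forall>x. 0 \<le> u t x \<and> u t x \<le> 1) \<and>
     (\<exists>ut ux uxx.
        continuous_on ({0<..} \<times> UNIV) (\<lambda>(t, x). ut t x) \<and>
        continuous_on ({0<..} \<times> UNIV) (\<lambda>(t, x). uxx t x) \<and>
        (\<forall>t>0. \<forall>x.
           ((\<lambda>s. u s x) has_real_derivative ut t x) (at t) \<and>
           ((\<lambda>y. u t y) has_real_derivative ux t x) (at x) \<and>
           ((\<lambda>y. ux t y) has_real_derivative uxx t x) (at x) \<and>
           ut t x = uxx t x + f (u t x)))"

definition upper_level_set :: "(real \<Rightarrow> real \<Rightarrow> real) \<Rightarrow> real \<Rightarrow> real \<Rightarrow> real set" where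
  "upper_level_set u lv t = {x. u t x \<ge> lv}"

definition level_pos :: "(real \<Rightarrow> real \<Rightarrow> real) \<Rightarrow> real \<Rightarrow> real \<Rightarrow> real" where
  "level_pos u lv t = Sup (upper_level_set u lv t)"

end

theory Submission
  imports Defs
begin


lemma left_max_deriv:
  fixes h :: "real \<Rightarrow> real"
  assumes d: "(h has_real_derivative D) (at_left t)"
    and ev: "\<forall>\<^sub>F s in at_left t. h s \<le> h t"
  shows "D \<ge> 0"
proof -
  have lim: "((\<lambda>s. (h s - h t) / (s - t)) \<longlongrightarrow> D) (at_left t)"
    using d by (simp add: has_field_derivative_iff)
  have "\<forall>\<^sub>F s in at_left t. s < t"
    by (simp add: eventually_at_filter)
  with ev have "\<forall>\<^sub>F s in at_left t. 0 \<le> (h s - h t) / (s - t)"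
    by eventually_elim (simp add: divide_nonpos_neg)
  from tendsto_lowerbound[OF lim this] show ?thesis by simp
qed

lemma second_deriv_max:
  fixes g g' :: "real \<Rightarrow> real"
  assumes mx: "\<forall>y. g y \<le> g x"
    and ev: "\<forall>\<^sub>F y in nhds x. (g has_real_derivative g' y) (at y)"
    and d2: "(g' has_real_derivative D) (at x)"
  shows "D \<le> 0"
proof (rule ccontr)
  assume "\<not> D \<le> 0" hence Dp: "D > 0" by simp
  obtain e where e: "e > 0" "\<forall>y. dist y x < e \<longrightarrow> (g has_real_derivative g' y) (at y)"
    using ev unfolding eventually_nhds_metric by auto
  have g'0: "g' x = 0"
    using DERIV_local_max[of g "g' x" x e] e mx by (auto simp: dist_real_def)
  have lim: "((\<lambda>y. (g' y - g' x) / (y - x)) \<longlongrightarrow> D) (at x)"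
    using d2 by (simp add: has_field_derivative_iff)
  have "\<forall>\<^sub>F y in at x. (g' y - g' x) / (y - x) > 0"
    using order_tendstoD(1)[OF lim Dp] .
  then obtain d where d: "d > 0" "\<forall>y. y \<noteq> x \<and> dist y x < d \<longrightarrow> (g' y - g' x) / (y - x) > 0"
    unfolding eventually_at by auto
  define b where "b = x + min d e / 2"
  have xb: "x < b" using d e by (simp add: b_def)
  have "\<And>y. x \<le> y \<Longrightarrow> y \<le> b \<Longrightarrow> (g has_real_derivative g' y) (at y)"
    using e(2) d e by (auto simp: b_def dist_real_def)
  from MVT2[OF xb this] obtain z where z: "x < z" "z < b" "g b - g x = (b - x) * g' z" by blast
  have "(g' z - g' x) / (z - x) > 0" using d z by (auto simp: b_def dist_real_def)
  with z g'0 have "g' z > 0" by (simp add: zero_less_divide_iff)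
  with xb have "(b - x) * g' z > 0" by simp
  with z have "g b > g x" by linarith
  with mx show False by (meson not_le)
qed

lemma comparison:
  fixes f :: "real \<Rightarrow> real" and p q :: "real \<Rightarrow> real \<Rightarrow> real" and M :: real
  assumes Lip: "\<forall>a b. 0 \<le> b \<and> b \<le> a \<and> a \<le> 1 \<longrightarrow> f a - f b \<le> M * (a - b)"
    and M: "M \<ge> 0"
    and contp: "continuous_on ({0..} \<times> UNIV) (\<lambda>(t, x). p t x)"
    and contq: "continuous_on ({0..} \<times> UNIV) (\<lambda>(t, x). q t x)"
    and pb: "\<forall>t\<ge>0. \<forall>x. p t x \<le> 1" and qb: "\<forall>t\<ge>0. \<forall>x. q t x \<ge> 0"
    and init: "\<forall>x. p 0 x \<le> q 0 x"
    and pde: "\<forall>t>0. \<forall>x. p t x > q t x \<longrightarrow> (\<exists>pt px pxx qt qx qxx.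
       ((\<lambda>s. p s x) has_real_derivative pt) (at_left t) \<and>
       (\<forall>\<^sub>F y in nhds x. ((\<lambda>y. p t y) has_real_derivative px y) (at y)) \<and>
       (px has_real_derivative pxx) (at x) \<and>
       ((\<lambda>s. q s x) has_real_derivative qt) (at_left t) \<and>
       (\<forall>\<^sub>F y in nhds x. ((\<lambda>y. q t y) has_real_derivative qx y) (at y)) \<and>
       (qx has_real_derivative qxx) (at x) \<and>
       pt - pxx - f (p t x) \<le> qt - qxx - f (q t x))"
  shows "\<forall>t\<ge>0. \<forall>x. p t x \<le> q t x"
proof (rule ccontr)
  assume "\<not> ?thesis"
  then obtain t1 x1 where t1: "t1 \<ge> 0" and gt: "p t1 x1 > q t1 x1" by (auto simp: not_le)
  have t1p: "t1 > 0" using t1 gt init by (cases "t1 = 0") (auto simp: not_le[symmetric])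
  define d0 where "d0 = p t1 x1 - q t1 x1"
  have d0: "d0 > 0" using gt by (simp add: d0_def)
  define \<epsilon> where "\<epsilon> = exp (- M * t1) * d0 / (2 * (x1\<^sup>2 + 3 * t1 + 1))"
  have ep: "\<epsilon> > 0" unfolding \<epsilon>_def using d0 t1 by (intro divide_pos_pos mult_pos_pos) (auto intro: add_nonneg_pos)
  define Z where "Z = (\<lambda>(t::real, x::real). exp (- M * t) * (p t x - q t x) - \<epsilon> * (x\<^sup>2 + 3 * t))"
  have Z1: "Z (t1, x1) > 0"
  proof -
    have nn: "x1\<^sup>2 + 3 * t1 \<ge> 0" using t1 by simp
    have X: "2 * (x1\<^sup>2 + 3 * t1 + 1) > 0" using nn by simp
    have "\<epsilon> * (x1\<^sup>2 + 3 * t1) < \<epsilon> * (2 * (x1\<^sup>2 + 3 * t1 + 1))"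
      using ep nn by (intro mult_strict_left_mono) auto
    also have "\<dots> = exp (- M * t1) * d0" unfolding \<epsilon>_def
      using X by simp
    finally show ?thesis by (simp add: Z_def d0_def)
  qed
  have Zle: "Z (t, x) \<le> 1 - \<epsilon> * x\<^sup>2" if "t \<ge> 0" for t x
  proof -
    have e1: "exp (- M * t) \<le> 1" using M that by (simp add: mult_nonneg_nonneg)
    have "p t x \<le> 1" "q t x \<ge> 0" using pb qb that by auto
    hence "p t x - q t x \<le> 1" by linarith
    hence "exp (- M * t) * (p t x - q t x) \<le> exp (- M * t) * 1"
      by (intro mult_left_mono) auto
    also have "\<dots> \<le> 1" using e1 by simp
    finally have A: "exp (- M * t) * (p t x - q t x) \<le> 1" .
    have B: "\<epsilon> * x\<^sup>2 \<le> \<epsilon> * (x\<^sup>2 + 3 * t)" using ep that by (intro mult_left_mono) auto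
    have "Z (t, x) = exp (- M * t) * (p t x - q t x) - \<epsilon> * (x\<^sup>2 + 3 * t)" by (simp add: Z_def)
    with A B show ?thesis by linarith
  qed
  define R where "R = 1 / \<epsilon> + 1"
  have Zneg: "Z (t, x) \<le> 0" if "t \<ge> 0" "\<bar>x\<bar> > R" for t x
  proof -
    have "R \<ge> 1" using ep by (simp add: R_def)
    hence x1: "\<bar>x\<bar> \<ge> 1" using that by linarith
    have "\<bar>x\<bar> * 1 \<le> \<bar>x\<bar> * \<bar>x\<bar>" using x1 by (intro mult_left_mono) auto
    also have "\<bar>x\<bar> * \<bar>x\<bar> = x\<^sup>2" by (simp add: power2_eq_square)
    finally have "x\<^sup>2 \<ge> \<bar>x\<bar>" by simp
    hence "x\<^sup>2 \<ge> 1 / \<epsilon>" using that by (simp add: R_def)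
    hence "\<epsilon> * x\<^sup>2 \<ge> 1" using ep by (simp add: field_simps)
    thus ?thesis using Zle[OF that(1), of x] by linarith
  qed
  define S where "S = {0..t1} \<times> {-R..R}"
  have cS: "compact S" unfolding S_def by (intro compact_Times compact_Icc)
  have x1R: "\<bar>x1\<bar> \<le> R" using Zneg[OF t1] Z1 by (meson not_le)
  have inS: "(t1, x1) \<in> S" using x1R t1 by (auto simp: S_def)
  have contZ: "continuous_on S Z"
  proof -
    have sub: "S \<subseteq> {0..} \<times> UNIV" by (auto simp: S_def)
    have cp: "continuous_on S (\<lambda>z. p (fst z) (snd z))"
      using continuous_on_subset[OF contp sub] by (simp add: case_prod_beta')
    have cq: "continuous_on S (\<lambda>z. q (fst z) (snd z))"
      using continuous_on_subset[OF contq sub] by (simp add: case_prod_beta')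
    have "continuous_on S (\<lambda>z. exp (- M * fst z) * (p (fst z) (snd z) - q (fst z) (snd z)) - \<epsilon> * ((snd z)\<^sup>2 + 3 * fst z))"
      by (intro continuous_intros cp cq)
    thus ?thesis by (simp add: Z_def case_prod_beta')
  qed
  obtain m where m: "m \<in> S" "\<forall>y\<in>S. Z y \<le> Z m"
    using continuous_attains_sup[OF cS _ contZ] inS by blast
  obtain ts xs where msplit: "m = (ts, xs)" by (cases m)
  have ts: "0 \<le> ts" "ts \<le> t1" using m(1) by (auto simp: S_def msplit)
  have Zm: "Z (ts, xs) > 0" using m(2) inS Z1 msplit by force
  have gmax: "Z (t, y) \<le> Z (ts, xs)" if "0 \<le> t" "t \<le> t1" for t y
  proof (cases "\<bar>y\<bar> \<le> R")
    case True
    hence "(t, y) \<in> S" using that by (auto simp: S_def abs_le_iff)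
    thus ?thesis using m(2) msplit by auto
  next
    case False thus ?thesis using Zneg[of t y] that Zm by auto
  qed
  have dpos: "p ts xs - q ts xs > 0"
  proof -
    have "\<epsilon> * (xs\<^sup>2 + 3 * ts) \<ge> 0" using ep ts by simp
    with Zm have "exp (- M * ts) * (p ts xs - q ts xs) > 0" by (simp add: Z_def)
    thus ?thesis by (simp add: zero_less_mult_iff)
  qed
  have tsp: "ts > 0"
  proof (rule ccontr)
    assume "\<not> ts > 0" hence "ts = 0" using ts by simp
    with dpos init show False by (metis diff_gt_0_iff_gt not_le)
  qed
  from pde tsp dpos obtain pt px pxx qt qx qxx where
    D: "((\<lambda>s. p s xs) has_real_derivative pt) (at_left ts)"
       "\<forall>\<^sub>F y in nhds xs. ((\<lambda>y. p ts y) has_real_derivative px y) (at y)"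
       "(px has_real_derivative pxx) (at xs)"
       "((\<lambda>s. q s xs) has_real_derivative qt) (at_left ts)"
       "\<forall>\<^sub>F y in nhds xs. ((\<lambda>y. q ts y) has_real_derivative qx y) (at y)"
       "(qx has_real_derivative qxx) (at xs)"
       "pt - pxx - f (p ts xs) \<le> qt - qxx - f (q ts xs)"
    by force
  define e where "e = exp (- M * ts)"
  have epos: "e > 0" by (simp add: e_def)
  have ht: "((\<lambda>s. exp (- M * s) * (p s xs - q s xs) - \<epsilon> * (xs\<^sup>2 + 3 * s)) has_real_derivative
      (- M * e * (p ts xs - q ts xs) + e * (pt - qt) - 3 * \<epsilon>)) (at_left ts)"
  proof -
    have E: "((\<lambda>s. exp (- M * s)) has_real_derivative (exp (- M * ts) * (- M))) (at_left ts)"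
      by (auto intro!: derivative_eq_intros)
    have A1: "((\<lambda>s. exp (- M * s) * (p s xs - q s xs)) has_real_derivative
        (exp (- M * ts) * (- M)) * (p ts xs - q ts xs) + (pt - qt) * exp (- M * ts)) (at_left ts)"
      by (rule DERIV_mult[OF E DERIV_diff[OF D(1) D(4)]])
    have A2: "((\<lambda>s. \<epsilon> * (xs\<^sup>2 + 3 * s)) has_real_derivative \<epsilon> * 3) (at_left ts)"
      by (auto intro!: derivative_eq_intros)
    show ?thesis by (rule DERIV_cong[OF DERIV_diff[OF A1 A2]]) (simp add: e_def algebra_simps)
  qed
  have "- M * e * (p ts xs - q ts xs) + e * (pt - qt) - 3 * \<epsilon> \<ge> 0"
  proof (rule left_max_deriv[OF ht])
    have "\<forall>\<^sub>F s in at_left ts. s \<in> {0<..<ts}" using eventually_at_left_real[OF tsp] .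
    thus "\<forall>\<^sub>F s in at_left ts. exp (- M * s) * (p s xs - q s xs) - \<epsilon> * (xs\<^sup>2 + 3 * s)
        \<le> exp (- M * ts) * (p ts xs - q ts xs) - \<epsilon> * (xs\<^sup>2 + 3 * ts)"
      by eventually_elim (use gmax ts in \<open>auto simp: Z_def\<close>)
  qed
  note Dt = this
  have ev2: "\<forall>\<^sub>F y in nhds xs. ((\<lambda>y. e * (p ts y - q ts y) - \<epsilon> * (y\<^sup>2 + 3 * ts)) has_real_derivative
      (e * (px y - qx y) - \<epsilon> * (2 * y))) (at y)"
    using D(2) D(5)
  proof eventually_elim
    case (elim y)
    have A2: "((\<lambda>y. \<epsilon> * (y\<^sup>2 + 3 * ts)) has_real_derivative \<epsilon> * (2 * y)) (at y)"
      by (auto intro!: derivative_eq_intros)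
    show ?case by (rule DERIV_diff[OF DERIV_cmult[OF DERIV_diff[OF elim]] A2])
  qed
  have d2: "((\<lambda>y. e * (px y - qx y) - \<epsilon> * (2 * y)) has_real_derivative (e * (pxx - qxx) - 2 * \<epsilon>)) (at xs)"
  proof -
    have A2: "((\<lambda>y. \<epsilon> * (2 * y)) has_real_derivative 2 * \<epsilon>) (at xs)"
      by (auto intro!: derivative_eq_intros)
    show ?thesis by (rule DERIV_diff[OF DERIV_cmult[OF DERIV_diff[OF D(3) D(6)]] A2])
  qed
  have "e * (pxx - qxx) - 2 * \<epsilon> \<le> 0"
  proof (rule second_deriv_max[OF _ ev2 d2], rule allI)
    fix y show "e * (p ts y - q ts y) - \<epsilon> * (y\<^sup>2 + 3 * ts) \<le> e * (p ts xs - q ts xs) - \<epsilon> * (xs\<^sup>2 + 3 * ts)"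
      using gmax[of ts y] ts by (simp add: Z_def e_def)
  qed
  note Dx = this
  have pq01: "0 \<le> q ts xs" "q ts xs \<le> p ts xs" "p ts xs \<le> 1" using pb qb ts dpos by auto
  have "f (p ts xs) - f (q ts xs) \<le> M * (p ts xs - q ts xs)" using Lip pq01 by blast
  with D(7) have "pt - qt \<le> pxx - qxx + M * (p ts xs - q ts xs)" by linarith
  hence "e * (pt - qt) \<le> e * (pxx - qxx + M * (p ts xs - q ts xs))"
    using epos by (intro mult_left_mono) auto
  with Dt Dx ep show False by (simp add: algebra_simps)
qed



definition Hf :: "real \<Rightarrow> real" where "Hf z = z^3 / (1 + z^3)"
definition H1 :: "real \<Rightarrow> real" where "H1 z = 3 * z^2 / (1 + z^3)^2"
definition H2 :: "real \<Rightarrow> real" where "H2 z = 6 * z * (1 - 2 * z^3) / (1 + z^3)^3"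

lemma Hf_deriv: assumes "z \<ge> 0" shows "(Hf has_real_derivative H1 z) (at z)"
proof -
  have p: "1 + z^3 > 0" using assms by (simp add: add_pos_nonneg)
  show ?thesis unfolding Hf_def H1_def
    apply (rule derivative_eq_intros refl)+
    using p apply simp
    using p apply (simp add: divide_simps)
    apply (simp add: algebra_simps power2_eq_square power3_eq_cube)
    done
qed

lemma H1_deriv: assumes "z \<ge> 0" shows "(H1 has_real_derivative H2 z) (at z)"
proof -
  have p: "1 + z^3 > 0" using assms by (simp add: add_pos_nonneg)
  show ?thesis unfolding H1_def H2_def
    apply (rule derivative_eq_intros refl)+
    using p apply simp
    using p apply (simp add: divide_simps)
    apply algebra
    done
qed

lemma z_le_cube: assumes "(z::real) \<ge> 0" shows "z \<le> 1 + z^3"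
proof (cases "z \<le> 1")
  case True thus ?thesis using \<open>z \<ge> 0\<close> by (simp add: add_increasing2)
next
  case False
  have "1 * 1 \<le> z * z" using False by (intro mult_mono) auto
  hence "z * 1 \<le> z * (z * z)" using \<open>z \<ge> 0\<close>
    by (intro mult_left_mono) auto
  thus ?thesis by (simp add: power3_eq_cube)
qed

lemma sq_le_cube: assumes "(z::real) \<ge> 0" shows "z^2 \<le> 1 + z^3"
proof (cases "z \<le> 1")
  case True
  hence "z^2 \<le> 1" using \<open>z \<ge> 0\<close> by (simp add: power_le_one)
  thus ?thesis using \<open>z \<ge> 0\<close> by (simp add: add_increasing2)
next
  case False
  hence "z^2 * 1 \<le> z^2 * z" using \<open>z \<ge> 0\<close>
    by (intro mult_left_mono) auto
  thus ?thesis by (simp add: power2_eq_square power3_eq_cube)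
qed

lemma Hf_bounds: assumes "(z::real) \<ge> 0" shows "0 \<le> Hf z" "Hf z \<le> 1" "Hf z \<le> z^3"
proof -
  have w: "z^3 \<ge> 0" using assms by simp
  show "0 \<le> Hf z" using w by (simp add: Hf_def)
  have p: "1 + z^3 > 0" using w by linarith
  show "Hf z \<le> 1" using w p by (simp add: Hf_def divide_le_eq)
  have "z^3 * 1 \<le> z^3 * (1 + z^3)" using w by (intro mult_left_mono) auto
  thus "Hf z \<le> z^3" using w by (simp add: Hf_def divide_le_eq add_pos_nonneg)
qed

lemma H1_bounds: assumes "(z::real) \<ge> 0" shows "0 \<le> H1 z" "H1 z \<le> 3" "H1 z \<le> 3 * z^2"
proof -
  have w: "z^3 \<ge> 0" using assms by simp
  have p: "(1 + z^3)^2 \<ge> 1" using w by (simp add: one_le_power)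
  show "0 \<le> H1 z" by (simp add: H1_def)
  have "3 * z^2 * 1 \<le> 3 * z^2 * (1 + z^3)^2" using p by (intro mult_left_mono) auto
  thus "H1 z \<le> 3 * z^2" using p by (simp add: H1_def divide_le_eq)
  have "(1 + z^3) * 1 \<le> (1 + z^3) * (1 + z^3)" using w by (intro mult_left_mono) auto
  hence "1 + z^3 \<le> (1 + z^3)^2" by (simp add: power2_eq_square)
  with sq_le_cube[OF assms] have "z^2 \<le> (1 + z^3)^2" by linarith
  thus "H1 z \<le> 3" using p by (simp add: H1_def divide_le_eq)
qed

lemma H2_bound: assumes "(z::real) \<ge> 0" shows "\<bar>H2 z\<bar> \<le> 12"
proof -
  have w: "z^3 \<ge> 0" using assms by simp
  have p: "(1 + z^3)^3 \<ge> 1" using w by (simp add: one_le_power)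
  have "\<bar>6 * z * (1 - 2 * z^3)\<bar> = 6 * z * \<bar>1 - 2 * z^3\<bar>" using assms by (simp add: abs_mult)
  also have "\<dots> \<le> 6 * z * (2 * (1 + z^3))"
  proof -
    have "\<bar>1 - 2 * z^3\<bar> \<le> 2 * (1 + z^3)" using w by (simp add: abs_le_iff)
    thus ?thesis using assms by (intro mult_left_mono) auto
  qed
  also have "\<dots> = 12 * (z * (1 + z^3))" by simp
  also have "\<dots> \<le> 12 * ((1 + z^3) * (1 + z^3))" using z_le_cube[OF assms] w
    by (intro mult_left_mono mult_right_mono) auto
  also have "\<dots> \<le> 12 * (1 + z^3)^3"
  proof -
    have "(1 + z^3) * (1 + z^3) * 1 \<le> (1 + z^3) * (1 + z^3) * (1 + z^3)" using w
      by (intro mult_left_mono) auto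
    thus ?thesis by (simp add: power3_eq_cube)
  qed
  finally have "\<bar>6 * z * (1 - 2 * z^3)\<bar> \<le> 12 * (1 + z^3)^3" .
  moreover have "\<bar>(1 + z^3)^3\<bar> = (1 + z^3)^3" using p by simp
  moreover have "(1 + z^3)^3 > 0" using p by linarith
  ultimately have "\<bar>6 * z * (1 - 2 * z^3)\<bar> / \<bar>(1 + z^3)^3\<bar> \<le> 12" by (simp add: divide_le_eq)
  thus ?thesis by (simp only: H2_def abs_divide)
qed

lemma H2_small: assumes "(z::real) \<ge> 0" "z \<le> 1/2" shows "H2 z \<ge> 3 * z"
proof -
  have w: "z^3 \<ge> 0" using assms by simp
  have w8: "z^3 \<le> (1/2)^3" using assms by (intro power_mono) auto
  have h8: "(1/2::real)^3 = 1/8" by (simp add: power3_eq_cube)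
  have w8': "z^3 \<le> 1/8" using w8 h8 by linarith
  have "(1 + z^3)^3 \<le> (9/8)^3" using w w8' by (intro power_mono) auto
  moreover have "(9/8::real)^3 = 729/512" by (simp add: power3_eq_cube)
  ultimately have c: "(1 + z^3)^3 \<le> 729/512" by linarith
  have p: "(1 + z^3)^3 > 0" using w by (simp add: add_pos_nonneg)
  have "3 * z * (1 + z^3)^3 \<le> 3 * z * (729/512)" using c assms by (intro mult_left_mono) auto
  also have "\<dots> \<le> 6 * z * (3/4)" using assms by simp
  also have "\<dots> \<le> 6 * z * (1 - 2 * z^3)" using assms w8' by (intro mult_left_mono) auto
  finally show ?thesis using p by (simp add: H2_def le_divide_eq)
qed

lemma Hf_large: assumes "(z::real) \<ge> 1/2" shows "Hf z \<ge> 1/9"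
proof -
  have w8: "z^3 \<ge> (1/2)^3" using assms by (intro power_mono) auto
  have h8: "(1/2::real)^3 = 1/8" by (simp add: power3_eq_cube)
  have "z^3 \<ge> 1/8" using w8 h8 by linarith
  moreover have "1 + z^3 > 0" using \<open>z^3 \<ge> 1/8\<close> by linarith
  ultimately show ?thesis by (simp add: Hf_def le_divide_eq)
qed

lemma sub_ineq:
  fixes f :: "real \<Rightarrow> real"
  assumes z: "z > 0" and a: "a0 \<le> a" "a \<le> \<theta>" "\<theta> < 1" "a0 > 0" and da: "0 \<le> da" "da \<le> \<kappa>"
   and L: "L \<ge> 1" and G: "\<Gamma> > 0" and ka: "\<kappa> \<le> a0 / L^2" "\<kappa> \<le> m/3"
   and Ga: "\<Gamma> \<le> a0 / L" "3 * \<Gamma> / L \<le> m/3" and Lm: "12 / L^2 \<le> m/3"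
   and fnn: "\<forall>s. 0 \<le> s \<and> s \<le> 1 \<longrightarrow> f s \<ge> 0"
   and fm: "\<forall>s. a0/9 \<le> s \<and> s \<le> \<theta> \<longrightarrow> f s \<ge> m"
  shows "da * Hf z + a * \<Gamma> * H1 z / L - a * H2 z / L^2 \<le> f (a * Hf z)"
proof -
  have z0: "z \<ge> 0" using z by simp
  have Lp: "L > 0" "L^2 > 0" using L by auto
  have a01: "0 \<le> a" "a \<le> 1" using a by auto
  note hb = Hf_bounds[OF z0] and h1 = H1_bounds[OF z0]
  have aH: "0 \<le> a * Hf z" "a * Hf z \<le> a"
    using a01 hb by (auto intro: mult_nonneg_nonneg mult_left_le)
  show ?thesis
  proof (cases "z \<le> 1/2")
    case True
    have T1: "da * Hf z \<le> \<kappa> * z^3" using da hb by (intro mult_mono) auto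
    have T2: "a * \<Gamma> * H1 z / L \<le> \<Gamma> * (3 * z^2) / L"
    proof -
      have "a * \<Gamma> * H1 z \<le> 1 * \<Gamma> * (3 * z^2)" using a01 G h1
        by (intro mult_mono) auto
      thus ?thesis using Lp by (simp add: divide_right_mono)
    qed
    have T3: "a0 * (3 * z) / L^2 \<le> a * H2 z / L^2"
    proof -
      have "a0 * (3 * z) \<le> a * H2 z" using a H2_small[OF z0 True] z0 by (intro mult_mono) auto
      thus ?thesis using Lp by (simp add: divide_right_mono)
    qed
    have z2: "z^2 \<le> z / 2"
    proof -
      have "z * z \<le> z * (1/2)" using True z0 by (intro mult_left_mono) auto
      thus ?thesis by (simp add: power2_eq_square)
    qed
    have z3: "z^3 \<le> z / 4"
    proof -
      have "z * z^2 \<le> (1/2) * (z/2)" using True z0 z2 by (intro mult_mono) auto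
      thus ?thesis by (simp add: power2_eq_square power3_eq_cube)
    qed
    have A1: "\<kappa> * z^3 \<le> a0 / L^2 * (z / 4)"
      using ka(1) z3 da z0 by (intro mult_mono) auto
    have A2: "\<Gamma> * (3 * z^2) / L \<le> 3 * a0 * z / (2 * L^2)"
    proof -
      have "\<Gamma> * (3 * z^2) \<le> a0 / L * (3 * (z / 2))" using Ga(1) z2 G by (intro mult_mono) auto
      hence "\<Gamma> * (3 * z^2) / L \<le> a0 / L * (3 * (z / 2)) / L" by (rule divide_right_mono) (use Lp in simp)
      also have "\<dots> = 3 * a0 * z / (2 * L^2)" by (simp add: power2_eq_square field_simps)
      finally show ?thesis .
    qed
    define X where "X = a0 * z / L^2"
    have e1: "a0 / L^2 * (z / 4) = X / 4" by (simp add: X_def)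
    have e2: "3 * a0 * z / (2 * L^2) = 3 * X / 2" by (simp add: X_def)
    have e3: "a0 * (3 * z) / L^2 = 3 * X" by (simp add: X_def)
    have X0: "X \<ge> 0" using a z0 Lp by (simp add: X_def)
    have f0: "f (a * Hf z) \<ge> 0" using fnn aH a01 by auto
    define P where "P = da * Hf z"
    define Q where "Q = a * \<Gamma> * H1 z / L"
    define R where "R = a * H2 z / L^2"
    have "P \<le> X / 4" using T1 A1 e1 unfolding P_def by linarith
    moreover have "Q \<le> 3 * X / 2" using T2 A2 e2 unfolding Q_def by linarith
    moreover have "3 * X \<le> R" using T3 e3 unfolding R_def by linarith
    ultimately have "P + Q - R \<le> f (a * Hf z)" using X0 f0 by linarith
    thus ?thesis by (simp add: P_def Q_def R_def)
  next
    case False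
    have hz: "Hf z \<ge> 1/9" using Hf_large False by simp
    have T1: "da * Hf z \<le> \<kappa>" using da hb mult_mono[of da \<kappa> "Hf z" 1] by auto
    have T2: "a * \<Gamma> * H1 z / L \<le> 3 * \<Gamma> / L"
    proof -
      have "a * \<Gamma> * H1 z \<le> 1 * \<Gamma> * 3" using a01 G h1 by (intro mult_mono) auto
      thus ?thesis using Lp by (simp add: divide_right_mono)
    qed
    have T3: "- (a * H2 z / L^2) \<le> 12 / L^2"
    proof -
      have "- (a * H2 z) \<le> \<bar>a * H2 z\<bar>" by simp
      also have "\<dots> = a * \<bar>H2 z\<bar>" using a01 by (simp add: abs_mult)
      also have "\<dots> \<le> 1 * 12" using a01 H2_bound[OF z0] by (intro mult_mono) auto
      finally have "- (a * H2 z) \<le> 12" by simp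
      hence "- (a * H2 z) / L^2 \<le> 12 / L^2" by (rule divide_right_mono) (use Lp in simp)
      thus ?thesis by simp
    qed
    have "a0 / 9 \<le> a * Hf z"
    proof -
      have "a0 * (1/9) \<le> a * Hf z" using a hz by (intro mult_mono) auto
      thus ?thesis by simp
    qed
    moreover have "a * Hf z \<le> \<theta>" using aH(2) a(2) by linarith
    ultimately have "f (a * Hf z) \<ge> m" using fm by blast
    thus ?thesis using T1 T2 T3 ka Ga Lm by linarith
  qed
qed



lemma sol_unpack:
  assumes "is_solution f u0 u"
  obtains ut ux uxx where
    "continuous_on ({0..} \<times> UNIV) (\<lambda>(t, x). u t x)"
    "\<forall>x. u 0 x = u0 x"
    "\<forall>t\<ge>0. \<forall>x. 0 \<le> u t x \<and> u t x \<le> 1"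
    "\<forall>t>0. \<forall>x. ((\<lambda>s. u s x) has_real_derivative ut t x) (at t) \<and>
           ((\<lambda>y. u t y) has_real_derivative ux t x) (at x) \<and>
           ((\<lambda>y. ux t y) has_real_derivative uxx t x) (at x) \<and>
           ut t x = uxx t x + f (u t x)"
proof -
  from assms obtain ut ux uxx where
    "continuous_on ({0..} \<times> UNIV) (\<lambda>(t, x). u t x)"
    "\<forall>x. u 0 x = u0 x"
    "\<forall>t\<ge>0. \<forall>x. 0 \<le> u t x \<and> u t x \<le> 1"
    "\<forall>t>0. \<forall>x. ((\<lambda>s. u s x) has_real_derivative ut t x) (at t) \<and>
           ((\<lambda>y. u t y) has_real_derivative ux t x) (at x) \<and>
           ((\<lambda>y. ux t y) has_real_derivative uxx t x) (at x) \<and>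
           ut t x = uxx t x + f (u t x)"
    unfolding is_solution_def by auto
  thus ?thesis using that by blast
qed

lemma Hfmax_cont: "continuous_on UNIV (\<lambda>v::real. Hf (max 0 v))"
proof -
  have hnz: "1 + (max 0 v)^3 \<noteq> 0" for v :: real
  proof -
    have "(max 0 v)^3 \<ge> 0" by simp
    hence "1 + (max 0 v)^3 > 0" by linarith
    thus ?thesis by simp
  qed
  show ?thesis unfolding Hf_def by (intro continuous_intros) (use hnz in auto)
qed

lemma lower_bound:
  fixes f u0 :: "real \<Rightarrow> real" and u :: "real \<Rightarrow> real \<Rightarrow> real"
  assumes Lip: "\<forall>a b. 0 \<le> b \<and> b \<le> a \<and> a \<le> 1 \<longrightarrow> f a - f b \<le> M * (a - b)" and M: "M \<ge> 0"
    and fcont: "continuous_on {0..1} f"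
    and fnn: "\<forall>s. 0 \<le> s \<and> s \<le> 1 \<longrightarrow> f s \<ge> 0"
    and fpos: "\<forall>s. 0 < s \<and> s < 1 \<longrightarrow> f s > 0"
    and sol: "is_solution f u0 u"
    and left: "\<forall>x\<le>l0. u0 x \<ge> \<delta>" and dp: "\<delta> > 0"
    and lv: "0 < lv" "lv < 1"
  shows "\<exists>\<Gamma>>0. \<exists>T. \<forall>t>T. \<exists>x. u t x \<ge> lv \<and> x > \<Gamma> * t"
proof -
  obtain ut ux uxx where
    ucont: "continuous_on ({0..} \<times> UNIV) (\<lambda>(t, x). u t x)" and
    uinit: "\<forall>x. u 0 x = u0 x" and
    ub: "\<forall>t\<ge>0. \<forall>x. 0 \<le> u t x \<and> u t x \<le> 1" and
    ud: "\<forall>t>0. \<forall>x. ((\<lambda>s. u s x) has_real_derivative ut t x) (at t) \<and>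
           ((\<lambda>y. u t y) has_real_derivative ux t x) (at x) \<and>
           ((\<lambda>y. ux t y) has_real_derivative uxx t x) (at x) \<and>
           ut t x = uxx t x + f (u t x)"
    by (rule sol_unpack[OF sol])
  define \<theta> where "\<theta> = (1 + lv) / 2"
  define \<theta>' where "\<theta>' = (lv + \<theta>) / 2"
  define a0 where "a0 = min \<delta> (\<theta> / 2)"
  have th: "lv < \<theta>'" "\<theta>' < \<theta>" "\<theta> < 1" using lv by (auto simp: \<theta>_def \<theta>'_def)
  have tp: "\<theta> > 0" using lv by (simp add: \<theta>_def)
  have a0h: "a0 \<le> \<theta> / 2" "a0 \<le> \<delta>" "a0 > 0" using dp tp unfolding a0_def by auto
  have a0: "0 < a0" "a0 < \<theta>" "a0 \<le> \<delta>" using a0h th lv by linarith+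
  obtain sm where sm: "sm \<in> {a0/9..\<theta>}" "\<forall>y\<in>{a0/9..\<theta>}. f sm \<le> f y"
  proof -
    have "continuous_on {a0/9..\<theta>} f" by (rule continuous_on_subset[OF fcont]) (use a0 th in auto)
    from continuous_attains_inf[OF compact_Icc _ this] a0 th that show ?thesis by auto
  qed
  define m where "m = f sm"
  have mpos: "m > 0" using sm a0 th fpos by (auto simp: m_def)
  have fm: "\<forall>s. a0/9 \<le> s \<and> s \<le> \<theta> \<longrightarrow> f s \<ge> m" using sm by (auto simp: m_def)
  define L where "L = 1 + 36 / m"
  have L1: "L \<ge> 1" using mpos by (simp add: L_def)
  have Lp: "L > 0" "L^2 > 0" using L1 by auto
  have Lm: "12 / L^2 \<le> m/3"
  proof -
    have "L * 1 \<le> L * L" using L1 by (intro mult_left_mono) auto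
    hence "36 / m \<le> L^2" by (simp add: L_def power2_eq_square)
    hence "36 \<le> L^2 * m" using mpos by (simp add: divide_le_eq)
    thus ?thesis using Lp mpos by (simp add: divide_le_eq mult.commute)
  qed
  define \<kappa> where "\<kappa> = min (a0 / L^2) (m / 3)"
  define \<Gamma> where "\<Gamma> = min (a0 / L) (m * L / 9)"
  have kp: "\<kappa> > 0" using a0 Lp mpos by (simp add: \<kappa>_def)
  have Gp: "\<Gamma> > 0" using a0 Lp mpos by (simp add: \<Gamma>_def)
  have ka: "\<kappa> \<le> a0 / L^2" "\<kappa> \<le> m/3" unfolding \<kappa>_def by (rule min.cobounded1, rule min.cobounded2)
  have Ga: "\<Gamma> \<le> a0 / L" "3 * \<Gamma> / L \<le> m/3"
  proof -
    show "\<Gamma> \<le> a0 / L" unfolding \<Gamma>_def by (rule min.cobounded1)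
    have "\<Gamma> \<le> m * L / 9" unfolding \<Gamma>_def by (rule min.cobounded2)
    hence "3 * \<Gamma> \<le> m/3 * L" by simp
    thus "3 * \<Gamma> / L \<le> m/3" using Lp by (simp add: divide_le_eq)
  qed
  define a where "a = (\<lambda>t::real. \<theta> - (\<theta> - a0) * exp (- \<kappa> * t))"
  define da where "da = (\<lambda>t::real. (\<theta> - a0) * (exp (- \<kappa> * t) * \<kappa>))"
  have a_deriv: "(a has_real_derivative da t) (at t)" for t
    unfolding a_def da_def by (auto intro!: derivative_eq_intros)
  have a_bounds: "a0 \<le> a t" "a t \<le> \<theta>" "0 \<le> da t" "da t \<le> \<kappa>" if "t \<ge> 0" for t
  proof -
    have e: "exp (- \<kappa> * t) \<le> 1" "exp (- \<kappa> * t) > 0" using kp that by auto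
    have "(\<theta> - a0) * exp (- \<kappa> * t) \<le> (\<theta> - a0) * 1" using e a0 by (intro mult_left_mono) auto
    thus "a0 \<le> a t" by (simp add: a_def)
    show "a t \<le> \<theta>" using e a0 by (simp add: a_def)
    show "0 \<le> da t" using e a0 kp by (simp add: da_def)
    have k1: "exp (- \<kappa> * t) * \<kappa> \<le> 1 * \<kappa>" by (rule mult_right_mono) (use e kp in auto)
    have "(\<theta> - a0) * (exp (- \<kappa> * t) * \<kappa>) \<le> 1 * (1 * \<kappa>)"
      by (rule mult_mono[OF _ k1]) (use e a0 kp th in auto)
    thus "da t \<le> \<kappa>" by (simp add: da_def)
  qed
  define w where "w = (\<lambda>t x. a t * Hf (max 0 ((l0 + \<Gamma> * t - x) / L)))"
  have Hf0: "Hf 0 = 0" by (simp add: Hf_def)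
  have w_eq: "w s y = a s * Hf ((l0 + \<Gamma> * s - y) / L)" if "l0 + \<Gamma> * s - y > 0" for s y
    using that Lp by (simp add: w_def)
  have hnz: "1 + (max 0 v)^3 \<noteq> 0" for v :: real
  proof -
    have "(max 0 v)^3 \<ge> 0" by simp
    hence "1 + (max 0 v)^3 > 0" by linarith
    thus ?thesis by simp
  qed
  have wcomp: "\<forall>t\<ge>0. \<forall>x. w t x \<le> u t x"
  proof (rule comparison[OF Lip M])
    show "continuous_on ({0..} \<times> UNIV) (\<lambda>(t, x). w t x)"
    proof -
      have c1: "continuous_on ({0..} \<times> UNIV) (\<lambda>p::real\<times>real. (l0 + \<Gamma> * fst p - snd p) / L)"
        by (intro continuous_intros) (use Lp in auto)
      have c2: "continuous_on ({0..} \<times> UNIV) (\<lambda>p::real\<times>real. Hf (max 0 ((l0 + \<Gamma> * fst p - snd p) / L)))"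
        by (rule continuous_on_compose2[OF Hfmax_cont c1]) auto
      have c3: "continuous_on ({0..} \<times> UNIV) (\<lambda>p::real\<times>real. a (fst p))"
        unfolding a_def by (intro continuous_intros)
      have "continuous_on ({0..} \<times> UNIV) (\<lambda>p::real\<times>real. a (fst p) * Hf (max 0 ((l0 + \<Gamma> * fst p - snd p) / L)))"
        by (rule continuous_on_mult[OF c3 c2])
      thus ?thesis by (simp add: w_def case_prod_beta')
    qed
    show "continuous_on ({0..} \<times> UNIV) (\<lambda>(t, x). u t x)" by (rule ucont)
    show "\<forall>t\<ge>0. \<forall>x. w t x \<le> 1"
    proof (intro allI impI)
      fix t x :: real assume t: "t \<ge> 0"
      have "Hf (max 0 ((l0 + \<Gamma> * t - x) / L)) \<le> 1" "Hf (max 0 ((l0 + \<Gamma> * t - x) / L)) \<ge> 0"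
        using Hf_bounds[of "max 0 ((l0 + \<Gamma> * t - x) / L)"] by auto
      moreover have "0 \<le> a t" "a t \<le> 1" using a_bounds[OF t] a0 th by auto
      ultimately show "w t x \<le> 1" unfolding w_def using mult_mono[of "a t" 1 "Hf (max 0 ((l0 + \<Gamma> * t - x) / L))" 1] by auto
    qed
    show "\<forall>t\<ge>0. \<forall>x. u t x \<ge> 0" using ub by auto
    show "\<forall>x. w 0 x \<le> u 0 x"
    proof
      fix x
      show "w 0 x \<le> u 0 x"
      proof (cases "x \<le> l0")
        case True
        have "Hf (max 0 ((l0 - x) / L)) \<le> 1" using Hf_bounds[of "max 0 ((l0 - x) / L)"] by auto
        moreover have "a 0 = a0" by (simp add: a_def)
        ultimately have "w 0 x \<le> a0" unfolding w_def using a0 by (simp add: mult_left_le)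
        thus ?thesis using left True a0 uinit by (metis order_trans)
      next
        case False
        hence "max 0 ((l0 - x) / L) = 0" using Lp by (simp add: divide_le_0_iff)
        hence "w 0 x = 0" by (simp add: w_def Hf0)
        thus ?thesis using ub by simp
      qed
    qed
    show "\<forall>t>0. \<forall>x. w t x > u t x \<longrightarrow> (\<exists>pt px pxx qt qx qxx.
       ((\<lambda>s. w s x) has_real_derivative pt) (at_left t) \<and>
       (\<forall>\<^sub>F y in nhds x. ((\<lambda>y. w t y) has_real_derivative px y) (at y)) \<and>
       (px has_real_derivative pxx) (at x) \<and>
       ((\<lambda>s. u s x) has_real_derivative qt) (at_left t) \<and>
       (\<forall>\<^sub>F y in nhds x. ((\<lambda>y. u t y) has_real_derivative qx y) (at y)) \<and>
       (qx has_real_derivative qxx) (at x) \<and>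
       pt - pxx - f (w t x) \<le> qt - qxx - f (u t x))"
    proof (intro allI impI)
      fix t x :: real assume t: "t > 0" and gt: "w t x > u t x"
      have "w t x > 0" using gt ub t by (meson less_eq_real_def order_le_less_trans)
      hence pos: "l0 + \<Gamma> * t - x > 0"
      proof (rule contrapos_pp)
        assume "\<not> l0 + \<Gamma> * t - x > 0"
        hence "max 0 ((l0 + \<Gamma> * t - x) / L) = 0" using Lp by (simp add: divide_le_0_iff)
        thus "\<not> w t x > 0" by (simp add: w_def Hf0)
      qed
      define z where "z = (l0 + \<Gamma> * t - x) / L"
      have zp: "z > 0" using pos Lp by (simp add: z_def)
      define pt where "pt = da t * Hf z + a t * (H1 z * (\<Gamma> / L))"
      define px where "px = (\<lambda>y. (a t * (- 1 / L)) * H1 ((l0 + \<Gamma> * t - y) / L))"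
      define pxx where "pxx = (a t * (- 1 / L)) * (H2 z * (- 1 / L))"
      have d1: "((\<lambda>s. w s x) has_real_derivative pt) (at t)"
      proof (rule has_field_derivative_transform_within_open)
        have "((\<lambda>s. (l0 + \<Gamma> * s - x) / L) has_real_derivative \<Gamma> / L) (at t)"
          using Lp by (auto intro!: derivative_eq_intros)
        from DERIV_chain2[OF Hf_deriv this] zp
        have "((\<lambda>s. Hf ((l0 + \<Gamma> * s - x) / L)) has_real_derivative H1 z * (\<Gamma> / L)) (at t)"
          by (simp add: z_def)
        from DERIV_mult[OF a_deriv this]
        show "((\<lambda>s. a s * Hf ((l0 + \<Gamma> * s - x) / L)) has_real_derivative pt) (at t)"
          by (rule DERIV_cong) (simp add: pt_def z_def algebra_simps)
        show "open {s. l0 + \<Gamma> * s - x > 0}"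
        proof -
          have "{s. l0 + \<Gamma> * s - x > 0} = {(x - l0) / \<Gamma> <..}" using Gp
            by (auto simp: field_simps)
          thus ?thesis by simp
        qed
        show "t \<in> {s. l0 + \<Gamma> * s - x > 0}" using pos by simp
        show "\<And>s. s \<in> {s. l0 + \<Gamma> * s - x > 0} \<Longrightarrow> a s * Hf ((l0 + \<Gamma> * s - x) / L) = w s x"
          using w_eq by simp
      qed
      have d2: "((\<lambda>y. w t y) has_real_derivative px y) (at y)" if y: "y < l0 + \<Gamma> * t" for y
      proof (rule has_field_derivative_transform_within_open)
        have "((\<lambda>y. (l0 + \<Gamma> * t - y) / L) has_real_derivative - 1 / L) (at y)"
          using Lp by (auto intro!: derivative_eq_intros)
        from DERIV_chain2[OF Hf_deriv this] y Lp
        have "((\<lambda>y. Hf ((l0 + \<Gamma> * t - y) / L)) has_real_derivative H1 ((l0 + \<Gamma> * t - y) / L) * (- 1 / L)) (at y)"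
          by simp
        from DERIV_cmult[OF this, of "a t"]
        show "((\<lambda>y. a t * Hf ((l0 + \<Gamma> * t - y) / L)) has_real_derivative px y) (at y)"
          by (rule DERIV_cong) (simp add: px_def)
        show "open {..< l0 + \<Gamma> * t}" by simp
        show "y \<in> {..< l0 + \<Gamma> * t}" using y by simp
        show "\<And>s. s \<in> {..< l0 + \<Gamma> * t} \<Longrightarrow> a t * Hf ((l0 + \<Gamma> * t - s) / L) = w t s"
          using w_eq by simp
      qed
      have ev2: "\<forall>\<^sub>F y in nhds x. ((\<lambda>y. w t y) has_real_derivative px y) (at y)"
      proof -
        have "\<forall>\<^sub>F y in nhds x. y \<in> {..< l0 + \<Gamma> * t}"
          using pos by (intro eventually_nhds_in_open) auto
        thus ?thesis by eventually_elim (use d2 in auto)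
      qed
      have d3: "(px has_real_derivative pxx) (at x)"
      proof -
        have "((\<lambda>y. (l0 + \<Gamma> * t - y) / L) has_real_derivative - 1 / L) (at x)"
          using Lp by (auto intro!: derivative_eq_intros)
        from DERIV_chain2[OF H1_deriv this] zp
        have "((\<lambda>y. H1 ((l0 + \<Gamma> * t - y) / L)) has_real_derivative H2 z * (- 1 / L)) (at x)"
          by (simp add: z_def)
        from DERIV_cmult[OF this, of "a t * (- 1 / L)"]
        show ?thesis unfolding px_def pxx_def .
      qed
      have ud': "((\<lambda>s. u s x) has_real_derivative ut t x) (at t)"
          "((\<lambda>y. u t y) has_real_derivative ux t y) (at y)"
          "((\<lambda>y. ux t y) has_real_derivative uxx t x) (at x)"
          "ut t x = uxx t x + f (u t x)" for y
        using ud t by blast+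
      have wz: "w t x = a t * Hf z" using w_eq pos by (simp add: z_def)
      have ineq: "da t * Hf z + a t * \<Gamma> * H1 z / L - a t * H2 z / L^2 \<le> f (a t * Hf z)"
        using a_bounds[of t] t
        by (intro sub_ineq[OF zp _ _ th(3) a0(1) _ _ L1 Gp ka Ga Lm fnn fm]) auto
      have "pt - pxx = da t * Hf z + a t * \<Gamma> * H1 z / L - a t * H2 z / L^2"
        by (simp add: pt_def pxx_def power2_eq_square)
      moreover have "f (w t x) = f (a t * Hf z)" using wz by simp
      ultimately have "pt - pxx - f (w t x) \<le> ut t x - uxx t x - f (u t x)"
        using ineq ud'(4) by linarith
      thus "\<exists>pt px pxx qt qx qxx.
       ((\<lambda>s. w s x) has_real_derivative pt) (at_left t) \<and>
       (\<forall>\<^sub>F y in nhds x. ((\<lambda>y. w t y) has_real_derivative px y) (at y)) \<and>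
       (px has_real_derivative pxx) (at x) \<and>
       ((\<lambda>s. u s x) has_real_derivative qt) (at_left t) \<and>
       (\<forall>\<^sub>F y in nhds x. ((\<lambda>y. u t y) has_real_derivative qx y) (at y)) \<and>
       (qx has_real_derivative qxx) (at x) \<and>
       pt - pxx - f (w t x) \<le> qt - qxx - f (u t x)"
        using has_field_derivative_at_within[OF d1] ev2 d3
          has_field_derivative_at_within[OF ud'(1)] ud'(2,3)
        by (intro exI[of _ pt] exI[of _ px] exI[of _ pxx] exI[of _ "ut t x"] exI[of _ "ux t"] exI[of _ "uxx t x"])
          (auto intro: always_eventually)
    qed
  qed
  define t1 where "t1 = max 0 (ln ((\<theta> - a0) / (\<theta> - \<theta>')) / \<kappa>)"
  have a_big: "a t \<ge> \<theta>'" if t: "t \<ge> t1" for t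
  proof -
    have r: "(\<theta> - a0) / (\<theta> - \<theta>') > 0" using a0 th by simp
    have "ln ((\<theta> - a0) / (\<theta> - \<theta>')) / \<kappa> \<le> t" using t by (simp add: t1_def)
    hence "ln ((\<theta> - a0) / (\<theta> - \<theta>')) \<le> \<kappa> * t" using kp by (simp add: divide_le_eq mult.commute)
    hence "exp (- \<kappa> * t) \<le> exp (- ln ((\<theta> - a0) / (\<theta> - \<theta>')))" by simp
    also have "\<dots> = (\<theta> - \<theta>') / (\<theta> - a0)" using r a0 th by (simp add: exp_minus ln_inverse[symmetric])
    finally have "exp (- \<kappa> * t) \<le> (\<theta> - \<theta>') / (\<theta> - a0)" .
    hence "(\<theta> - a0) * exp (- \<kappa> * t) \<le> \<theta> - \<theta>'" using a0 by (simp add: le_divide_eq mult.commute)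
    thus ?thesis by (simp add: a_def)
  qed
  define q where "q = lv / \<theta>'"
  have q: "0 < q" "q < 1" using lv th by (auto simp: q_def)
  define Z where "Z = q / (1 - q) + 1"
  have Z1: "Z \<ge> 1" using q by (simp add: Z_def)
  have HZ: "Hf Z \<ge> q"
  proof -
    have "Z * 1 \<le> Z * (Z * Z)" using Z1 mult_mono[of 1 Z 1 Z] by (intro mult_left_mono) auto
    hence Z3: "Z^3 \<ge> Z" by (simp add: power3_eq_cube)
    have "q / (1 - q) \<le> Z^3" using Z3 by (simp add: Z_def)
    hence "q \<le> Z^3 * (1 - q)" using q by (simp add: divide_le_eq)
    hence "q * (1 + Z^3) \<le> Z^3" by (simp add: algebra_simps)
    moreover have "1 + Z^3 > 0" using Z1 by (simp add: add_pos_nonneg)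
    ultimately show ?thesis by (simp add: Hf_def le_divide_eq)
  qed
  define T where "T = max t1 (2 * (L * Z - l0) / \<Gamma>)"
  show ?thesis
  proof (rule exI[of _ "\<Gamma> / 2"], rule conjI)
    show "\<Gamma> / 2 > 0" using Gp by simp
    show "\<exists>T. \<forall>t>T. \<exists>x. lv \<le> u t x \<and> \<Gamma> / 2 * t < x"
    proof (rule exI[of _ T], intro allI impI)
    fix t assume tT: "t > T"
    have t1le: "t \<ge> t1" and t0: "t \<ge> 0" using tT by (auto simp: T_def t1_def)
    define xs where "xs = l0 + \<Gamma> * t - L * Z"
    have "(l0 + \<Gamma> * t - xs) / L = Z" using Lp by (simp add: xs_def)
    moreover have "l0 + \<Gamma> * t - xs > 0" using Lp Z1 by (simp add: xs_def)
    ultimately have wx: "w t xs = a t * Hf Z" using w_eq by metis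
    have "lv = \<theta>' * q" using th lv by (simp add: q_def)
    also have "\<dots> \<le> a t * Hf Z" using a_big[OF t1le] HZ q th lv by (intro mult_mono) auto
    finally have "lv \<le> u t xs" using wx wcomp t0 by (metis order_trans)
    moreover have "xs > \<Gamma> / 2 * t"
    proof -
      have "2 * (L * Z - l0) / \<Gamma> < t" using tT by (simp add: T_def)
      hence "2 * (L * Z - l0) < t * \<Gamma>" using Gp by (simp add: divide_less_eq)
      thus ?thesis by (simp add: xs_def algebra_simps)
    qed
    ultimately show "\<exists>x. u t x \<ge> lv \<and> x > \<Gamma> / 2 * t" by blast
  qed
  qed
qed



lemma super_ineq:
  fixes f :: "real \<Rightarrow> real"
  assumes s1: "s \<ge> 1" and b: "0 < b" "b \<le> 1" and mu: "\<mu> > 0" and A: "A \<ge> 1"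
    and phi: "\<phi> = A * exp (- \<mu> * s powr b)" and phi1: "\<phi> < 1"
    and ab: "b * (1 + \<alpha>) \<ge> 1" and al: "\<alpha> > 0" and r: "r > 0"
    and fup: "\<forall>s. 0 < s \<and> s < 1 \<longrightarrow> f s \<le> r * s / (1 + \<bar>ln s\<bar>) powr \<alpha>"
    and c1: "c \<ge> r * (2 / \<mu>) powr \<alpha>" and c2: "c \<ge> r * S2 powr (1 - b)"
    and S2: "S2 = max ((2 * ln A / \<mu>) powr (1 / b)) 1"
  shows "f \<phi> \<le> c * (s powr (b - 1)) * \<phi>"
proof -
  have php: "\<phi> > 0" using phi A by simp
  have s0: "s > 0" using s1 by simp
  define Q where "Q = s powr (b - 1)"
  have Qp: "Q > 0" using s0 by (simp add: Q_def)
  define D where "D = (1 + \<bar>ln \<phi>\<bar>) powr \<alpha>"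
  have D1: "D \<ge> 1" unfolding D_def using al by (intro ge_one_powr_ge_zero) auto
  have fphi: "f \<phi> \<le> r * \<phi> / D" using fup php phi1 by (simp add: D_def)
  have lnphi: "ln \<phi> = ln A - \<mu> * s powr b" using A by (simp add: phi ln_mult)
  have "ln \<phi> < 0" using php phi1 by simp
  hence absln: "\<bar>ln \<phi>\<bar> = \<mu> * s powr b - ln A" using lnphi by simp
  have lnA: "ln A \<ge> 0" using A by simp
  show ?thesis
  proof (cases "2 * ln A \<le> \<mu> * s powr b")
    case True
    have "\<mu> * s powr b / 2 \<le> 1 + \<bar>ln \<phi>\<bar>" using True absln by linarith
    hence "(\<mu> * s powr b / 2) powr \<alpha> \<le> D" unfolding D_def using al mu s0
      by (intro powr_mono2) auto
    moreover have "(\<mu> * s powr b / 2) powr \<alpha> = (\<mu> / 2) powr \<alpha> * s powr (b * \<alpha>)"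
      using mu s0 by (simp add: powr_mult powr_divide powr_powr)
    ultimately have Dlow: "(\<mu> / 2) powr \<alpha> * s powr (b * \<alpha>) \<le> D" by simp
    have pos1: "(\<mu> / 2) powr \<alpha> * s powr (b * \<alpha>) > 0" using mu s0 by simp
    have "r * \<phi> / D \<le> r * \<phi> / ((\<mu> / 2) powr \<alpha> * s powr (b * \<alpha>))"
      using Dlow pos1 r php by (intro divide_left_mono) auto
    also have "\<dots> = r * (2 / \<mu>) powr \<alpha> * s powr (- (b * \<alpha>)) * \<phi>"
      using mu s0 by (simp add: powr_minus powr_divide divide_simps)
    also have "\<dots> \<le> r * (2 / \<mu>) powr \<alpha> * Q * \<phi>"
    proof -
      have "s powr (- (b * \<alpha>)) \<le> Q" unfolding Q_def using ab s1
        by (intro powr_mono) (auto simp: algebra_simps)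
      thus ?thesis using r mu php by (intro mult_right_mono mult_left_mono) auto
    qed
    also have "\<dots> \<le> c * Q * \<phi>" using c1 Qp php by (intro mult_right_mono) auto
    finally show ?thesis using fphi by (simp add: Q_def)
  next
    case False
    hence sb: "s powr b < 2 * ln A / \<mu>" using mu by (simp add: less_divide_eq mult.commute)
    have "s = (s powr b) powr (1 / b)" using s0 b by (simp add: powr_powr)
    also have "\<dots> < (2 * ln A / \<mu>) powr (1 / b)" using sb b s0 by (intro powr_less_mono2) auto
    also have "\<dots> \<le> S2" by (simp add: S2)
    finally have sS: "s < S2" .
    have S2p: "S2 \<ge> 1" by (simp add: S2)
    have "S2 powr (b - 1) \<le> Q" unfolding Q_def using b s0 sS by (intro powr_mono2') auto
    hence "r * S2 powr (1 - b) * S2 powr (b - 1) \<le> r * S2 powr (1 - b) * Q"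
      using r by (intro mult_left_mono) auto
    moreover have "S2 powr (1 - b) * S2 powr (b - 1) = 1" using S2p by (simp add: powr_add[symmetric])
    hence "r * S2 powr (1 - b) * S2 powr (b - 1) = r" by (simp add: mult.assoc)
    ultimately have "r \<le> r * S2 powr (1 - b) * Q" by linarith
    also have "\<dots> \<le> c * Q" using c2 Qp by (intro mult_right_mono) auto
    finally have rc: "r \<le> c * Q" .
    have rp: "r * \<phi> > 0" using r php by simp
    have "r * \<phi> * 1 \<le> r * \<phi> * D" using D1 rp by (intro mult_left_mono) auto
    hence "r * \<phi> / D \<le> r * \<phi>" using D1 by (simp add: divide_le_eq)
    also have "\<dots> \<le> c * Q * \<phi>" using rc php by (intro mult_right_mono) auto
    finally show ?thesis using fphi by (simp add: Q_def)
  qed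
qed



lemma maxpowr_cont: assumes "b > 0" shows "continuous_on UNIV (\<lambda>s::real. (max s 0) powr b)"
proof -
  have c1: "continuous_on UNIV (\<lambda>s::real. max s 0)" by (intro continuous_intros)
  have c2: "continuous_on UNIV (\<lambda>s::real. b)" by (rule continuous_on_const)
  show ?thesis by (rule continuous_on_powr'[OF c1 c2]) (use assms in auto)
qed

lemma upper_bound:
  fixes f u0 :: "real \<Rightarrow> real" and u :: "real \<Rightarrow> real \<Rightarrow> real"
  assumes Lip: "\<forall>a b. 0 \<le> b \<and> b \<le> a \<and> a \<le> 1 \<longrightarrow> f a - f b \<le> M * (a - b)" and M: "M \<ge> 0"
    and sol: "is_solution f u0 u"
    and fup: "\<forall>s. 0 < s \<and> s < 1 \<longrightarrow> f s \<le> r * s / (1 + \<bar>ln s\<bar>) powr \<alpha>"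
    and al: "\<alpha> > 0" and r: "r > 0"
    and beta: "\<beta> > 0" "\<beta> \<ge> 1 / (\<alpha> + 1)"
    and x0: "x0 > 0" and mu: "\<mu> > 0"
    and decay: "\<exists>C>0. \<forall>x\<ge>x0. u0 x \<le> C * exp (- \<mu> * x powr \<beta>)"
    and lv: "0 < lv" "lv < 1"
  shows "\<exists>c>0. \<exists>S. \<forall>t\<ge>0. \<forall>x. u t x \<ge> lv \<longrightarrow> x \<le> c * t + S"
proof -
  obtain ut ux uxx where
    ucont: "continuous_on ({0..} \<times> UNIV) (\<lambda>(t, x). u t x)" and
    uinit: "\<forall>x. u 0 x = u0 x" and
    ub: "\<forall>t\<ge>0. \<forall>x. 0 \<le> u t x \<and> u t x \<le> 1" and
    ud: "\<forall>t>0. \<forall>x. ((\<lambda>s. u s x) has_real_derivative ut t x) (at t) \<and>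
           ((\<lambda>y. u t y) has_real_derivative ux t x) (at x) \<and>
           ((\<lambda>y. ux t y) has_real_derivative uxx t x) (at x) \<and>
           ut t x = uxx t x + f (u t x)"
    by (rule sol_unpack[OF sol])
  obtain C where C: "C > 0" "\<forall>x\<ge>x0. u0 x \<le> C * exp (- \<mu> * x powr \<beta>)" using decay by blast
  define b where "b = min \<beta> 1"
  have b: "0 < b" "b \<le> 1" "b \<le> \<beta>" using beta by (auto simp: b_def)
  have ab: "b * (1 + \<alpha>) \<ge> 1"
  proof (cases "\<beta> \<le> 1")
    case True
    hence "b = \<beta>" by (simp add: b_def)
    moreover have "1 \<le> \<beta> * (\<alpha> + 1)" using beta al by (simp add: divide_le_eq)
    ultimately show ?thesis by (simp add: algebra_simps)
  next
    case False
    hence "b = 1" by (simp add: b_def)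
    thus ?thesis using al by simp
  qed
  define x1 where "x1 = max x0 1"
  have x1: "x1 \<ge> 1" "x1 \<ge> x0" unfolding x1_def by (rule max.cobounded2, rule max.cobounded1)
  define A where "A = max C (exp (\<mu> * x1 powr b))"
  have A1: "A \<ge> exp (\<mu> * x1 powr b)" "A \<ge> C" unfolding A_def by (rule max.cobounded2, rule max.cobounded1)
  have "\<mu> * x1 powr b \<ge> 0" using mu by simp
  hence eg1: "exp (\<mu> * x1 powr b) \<ge> 1" by simp
  have A: "A \<ge> 1" using A1 eg1 by linarith
  define S2 where "S2 = max ((2 * ln A / \<mu>) powr (1 / b)) 1"
  define cc where "cc = max (r * (2 / \<mu>) powr \<alpha>) (r * S2 powr (1 - b))"
  have cc: "cc \<ge> r * (2 / \<mu>) powr \<alpha>" "cc \<ge> r * S2 powr (1 - b)" unfolding cc_def by (rule max.cobounded1, rule max.cobounded2)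
  have "r * (2 / \<mu>) powr \<alpha> > 0" using r mu by simp
  hence ccp: "cc > 0" using cc(1) by linarith
  define c where "c = (cc + \<mu>^2 * b^2 + \<mu> * b * (1 - b)) / (\<mu> * b)"
  have mb: "\<mu> * b > 0" using mu b by simp
  have cmb: "c * \<mu> * b = cc + \<mu>^2 * b^2 + \<mu> * b * (1 - b)"
    using mb unfolding c_def by (metis mult.assoc nonzero_eq_divide_eq order_less_irrefl)
  have cp: "c > 0"
  proof -
    have "\<mu>^2 * b^2 \<ge> 0" "\<mu> * b * (1 - b) \<ge> 0" using mb b by auto
    hence "cc + \<mu>^2 * b^2 + \<mu> * b * (1 - b) > 0" using ccp by linarith
    thus ?thesis using mb by (simp add: c_def)
  qed
  define \<psi> where "\<psi> = (\<lambda>s. A * exp (- \<mu> * (max s 0) powr b))"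
  define v where "v = (\<lambda>t x. \<psi> (x - c * t))"
  have vcomp: "\<forall>t\<ge>0. \<forall>x. u t x \<le> v t x"
  proof (rule comparison[OF Lip M])
    show "continuous_on ({0..} \<times> UNIV) (\<lambda>(t, x). u t x)" by (rule ucont)
    show "continuous_on ({0..} \<times> UNIV) (\<lambda>(t, x). v t x)"
    proof -
      have i1: "continuous_on ({0..} \<times> UNIV) (\<lambda>p::real\<times>real. snd p - c * fst p)"
        by (intro continuous_intros)
      have i2: "continuous_on ({0..} \<times> UNIV) (\<lambda>p::real\<times>real. (max (snd p - c * fst p) 0) powr b)"
        by (rule continuous_on_compose2[OF maxpowr_cont[OF b(1)] i1]) auto
      have "continuous_on ({0..} \<times> UNIV) (\<lambda>p::real\<times>real. A * exp (- \<mu> * (max (snd p - c * fst p) 0) powr b))"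
        by (intro continuous_intros i2)
      thus ?thesis by (simp add: v_def \<psi>_def case_prod_beta')
    qed
    show "\<forall>t\<ge>0. \<forall>x. u t x \<le> 1" using ub by blast
    show "\<forall>t\<ge>0. \<forall>x. v t x \<ge> 0" using A by (simp add: v_def \<psi>_def)
    have big: "\<psi> s \<ge> 1" if "s \<le> x1" for s
    proof -
      have "max s 0 \<le> x1" using that x1 by simp
      hence "(max s 0) powr b \<le> x1 powr b" using b by (intro powr_mono2) auto
      hence "exp (- \<mu> * x1 powr b) \<le> exp (- \<mu> * (max s 0) powr b)" using mu by simp
      moreover have "exp (\<mu> * x1 powr b) * exp (- \<mu> * x1 powr b) = 1" by (simp add: exp_minus)
      ultimately have "1 \<le> exp (\<mu> * x1 powr b) * exp (- \<mu> * (max s 0) powr b)"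
        by (metis exp_gt_zero mult_left_mono less_imp_le)
      also have "\<dots> \<le> A * exp (- \<mu> * (max s 0) powr b)" using A1 by (intro mult_right_mono) auto
      finally show ?thesis by (simp add: \<psi>_def)
    qed
    show "\<forall>x. u 0 x \<le> v 0 x"
    proof
      fix x
      show "u 0 x \<le> v 0 x"
      proof (cases "x \<le> x1")
        case True
        thus ?thesis using big[OF True] ub by (simp add: v_def) (meson order_trans order_refl)
      next
        case False
        hence xx: "x \<ge> x0" "x \<ge> 1" using x1 by auto
        have "u 0 x \<le> C * exp (- \<mu> * x powr \<beta>)" using C xx uinit by simp
        also have "\<dots> \<le> A * exp (- \<mu> * x powr b)"
        proof (rule mult_mono)
          show "C \<le> A" using A1 by simp
          have "x powr b \<le> x powr \<beta>" using b xx by (intro powr_mono) auto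
          thus "exp (- \<mu> * x powr \<beta>) \<le> exp (- \<mu> * x powr b)" using mu by simp
        qed (use A in auto)
        also have "\<dots> = v 0 x" using xx by (simp add: v_def \<psi>_def)
        finally show ?thesis .
      qed
    qed
    show "\<forall>t>0. \<forall>x. u t x > v t x \<longrightarrow> (\<exists>pt px pxx qt qx qxx.
       ((\<lambda>s. u s x) has_real_derivative pt) (at_left t) \<and>
       (\<forall>\<^sub>F y in nhds x. ((\<lambda>y. u t y) has_real_derivative px y) (at y)) \<and>
       (px has_real_derivative pxx) (at x) \<and>
       ((\<lambda>s. v s x) has_real_derivative qt) (at_left t) \<and>
       (\<forall>\<^sub>F y in nhds x. ((\<lambda>y. v t y) has_real_derivative qx y) (at y)) \<and>
       (qx has_real_derivative qxx) (at x) \<and>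
       pt - pxx - f (u t x) \<le> qt - qxx - f (v t x))"
    proof (intro allI impI)
      fix t x :: real assume t: "t > 0" and gt: "u t x > v t x"
      have v1: "v t x < 1" using gt ub t by (meson less_eq_real_def order_less_le_trans)
      define s where "s = x - c * t"
      have sx1: "s > x1"
      proof (rule ccontr)
        assume "\<not> s > x1" hence "\<psi> s \<ge> 1" using big by simp
        thus False using v1 by (simp add: v_def s_def)
      qed
      have s1: "s \<ge> 1" and sp: "s > 0" using sx1 x1 by auto
      define \<phi> where "\<phi> = A * exp (- \<mu> * s powr b)"
      have vphi: "v t x = \<phi>" using sp by (simp add: v_def \<psi>_def \<phi>_def s_def)
      have php: "\<phi> > 0" using A by (simp add: \<phi>_def)
      define Q where "Q = s powr (b - 1)"
      define R where "R = s powr (b - 2)"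
      define qt where "qt = c * \<mu> * b * Q * \<phi>"
      define qx where "qx = (\<lambda>y. A * exp (- \<mu> * (y - c * t) powr b) * (- \<mu> * (b * (y - c * t) powr (b - 1))))"
      define qxx where "qxx = \<phi> * (\<mu> * b * Q)^2 + (- \<mu> * (b * ((b - 1) * R))) * \<phi>"
      have veq: "v \<tau> y = A * exp (- \<mu> * (y - c * \<tau>) powr b)" if "y - c * \<tau> > 0" for \<tau> y
        using that by (simp add: v_def \<psi>_def)
      have dt: "((\<lambda>\<tau>. v \<tau> x) has_real_derivative qt) (at t)"
      proof (rule has_field_derivative_transform_within_open)
        show "((\<lambda>\<tau>. A * exp (- \<mu> * (x - c * \<tau>) powr b)) has_real_derivative qt) (at t)"
          using sp unfolding s_def
          by (auto intro!: derivative_eq_intros simp: qt_def Q_def \<phi>_def s_def algebra_simps)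
        show "open {..< x / c}" by simp
        show "t \<in> {..< x / c}" using sp cp by (simp add: s_def field_simps)
        show "\<And>\<tau>. \<tau> \<in> {..< x / c} \<Longrightarrow> A * exp (- \<mu> * (x - c * \<tau>) powr b) = v \<tau> x"
          using cp by (intro veq[symmetric]) (simp add: field_simps)
      qed
      have dx: "((\<lambda>y. v t y) has_real_derivative qx y) (at y)" if y: "y > c * t" for y
      proof (rule has_field_derivative_transform_within_open)
        show "((\<lambda>y. A * exp (- \<mu> * (y - c * t) powr b)) has_real_derivative qx y) (at y)"
          using y by (auto intro!: derivative_eq_intros simp: qx_def algebra_simps)
        show "open {c * t <..}" by simp
        show "y \<in> {c * t <..}" using y by simp
        show "\<And>z. z \<in> {c * t <..} \<Longrightarrow> A * exp (- \<mu> * (z - c * t) powr b) = v t z"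
          by (intro veq[symmetric]) simp
      qed
      have evx: "\<forall>\<^sub>F y in nhds x. ((\<lambda>y. v t y) has_real_derivative qx y) (at y)"
      proof -
        have "\<forall>\<^sub>F y in nhds x. y \<in> {c * t <..}"
          using sp by (intro eventually_nhds_in_open) (auto simp: s_def)
        thus ?thesis by eventually_elim (use dx in auto)
      qed
      have dxx: "(qx has_real_derivative qxx) (at x)"
        unfolding qx_def using sp unfolding s_def
        by (auto intro!: derivative_eq_intros simp: qxx_def Q_def R_def \<phi>_def s_def algebra_simps power2_eq_square)
      have ud': "((\<lambda>s. u s x) has_real_derivative ut t x) (at t)"
          "((\<lambda>y. u t y) has_real_derivative ux t y) (at y)"
          "((\<lambda>y. ux t y) has_real_derivative uxx t x) (at x)"
          "ut t x = uxx t x + f (u t x)" for y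
        using ud t by blast+
      have fphi: "f \<phi> \<le> cc * Q * \<phi>"
        unfolding Q_def
        by (rule super_ineq[OF s1 b(1) b(2) mu A \<phi>_def _ ab al r fup cc(1) cc(2) S2_def])
          (use v1 vphi in simp)
      have Q1: "Q \<le> 1" unfolding Q_def using s1 b powr_mono[of "b - 1" 0 s] by simp
      have Q0: "Q > 0" using sp by (simp add: Q_def)
      have RQ: "R \<le> Q" unfolding R_def Q_def using s1 by (intro powr_mono) auto
      have i1: "\<phi> * (\<mu> * b * Q)^2 \<le> \<mu>^2 * b^2 * Q * \<phi>"
      proof -
        have "Q * Q \<le> Q * 1" using Q1 Q0 by (intro mult_left_mono) auto
        hence "\<mu>^2 * b^2 * \<phi> * (Q * Q) \<le> \<mu>^2 * b^2 * \<phi> * Q"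
          using php by (intro mult_left_mono) auto
        thus ?thesis by (simp add: power2_eq_square algebra_simps)
      qed
      have i2: "(- \<mu> * (b * ((b - 1) * R))) * \<phi> \<le> \<mu> * b * (1 - b) * Q * \<phi>"
      proof -
        have "\<mu> * b * (1 - b) * \<phi> * R \<le> \<mu> * b * (1 - b) * \<phi> * Q"
          using RQ mu b php by (intro mult_left_mono) auto
        thus ?thesis by (simp add: algebra_simps)
      qed
      have "qt - qxx - f \<phi> \<ge> 0"
      proof -
        have "qt = (cc + \<mu>^2 * b^2 + \<mu> * b * (1 - b)) * Q * \<phi>"
          unfolding qt_def using cmb by simp
        also have "\<dots> = cc * Q * \<phi> + \<mu>^2 * b^2 * Q * \<phi> + \<mu> * b * (1 - b) * Q * \<phi>"
          by (simp add: algebra_simps)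
        finally have "qt = cc * Q * \<phi> + \<mu>^2 * b^2 * Q * \<phi> + \<mu> * b * (1 - b) * Q * \<phi>" .
        thus ?thesis using i1 i2 fphi unfolding qxx_def by linarith
      qed
      hence ineq: "ut t x - uxx t x - f (u t x) \<le> qt - qxx - f (v t x)"
        using ud'(4) vphi by simp
      show "\<exists>pt px pxx qt qx qxx.
       ((\<lambda>s. u s x) has_real_derivative pt) (at_left t) \<and>
       (\<forall>\<^sub>F y in nhds x. ((\<lambda>y. u t y) has_real_derivative px y) (at y)) \<and>
       (px has_real_derivative pxx) (at x) \<and>
       ((\<lambda>s. v s x) has_real_derivative qt) (at_left t) \<and>
       (\<forall>\<^sub>F y in nhds x. ((\<lambda>y. v t y) has_real_derivative qx y) (at y)) \<and>
       (qx has_real_derivative qxx) (at x) \<and>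
       pt - pxx - f (u t x) \<le> qt - qxx - f (v t x)"
        using has_field_derivative_at_within[OF ud'(1)] ud'(2,3)
          has_field_derivative_at_within[OF dt] evx dxx ineq
        by (intro exI[of _ "ut t x"] exI[of _ "ux t"] exI[of _ "uxx t x"] exI[of _ qt] exI[of _ qx] exI[of _ qxx])
          (auto intro: always_eventually)
    qed
  qed
  define S where "S = (ln (A / lv) / \<mu>) powr (1 / b)"
  show ?thesis
  proof (rule exI[of _ c], rule conjI[OF cp], rule exI[of _ S], intro allI impI)
    fix t x assume t: "t \<ge> 0" and ux: "u t x \<ge> lv"
    have vl: "v t x \<ge> lv" using vcomp t ux by (meson order_trans)
    show "x \<le> c * t + S"
    proof (cases "x - c * t \<le> 0")
      case True
      have "S \<ge> 0" by (simp add: S_def)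
      thus ?thesis using True by linarith
    next
      case False
      define s where "s = x - c * t"
      have sp: "s > 0" using False by (simp add: s_def)
      have "v t x = A * exp (- \<mu> * s powr b)" using sp by (simp add: v_def \<psi>_def s_def)
      hence "lv \<le> A * exp (- \<mu> * s powr b)" using vl by simp
      hence "ln lv \<le> ln (A * exp (- \<mu> * s powr b))" using lv by simp
      also have "\<dots> = ln A - \<mu> * s powr b" using A by (simp add: ln_mult)
      finally have "\<mu> * s powr b \<le> ln A - ln lv" by linarith
      also have "ln A - ln lv = ln (A / lv)" using A lv by (simp add: ln_div)
      finally have "s powr b \<le> ln (A / lv) / \<mu>" using mu by (simp add: le_divide_eq mult.commute)
      hence "(s powr b) powr (1 / b) \<le> (ln (A / lv) / \<mu>) powr (1 / b)"
        using b by (intro powr_mono2) auto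
      moreover have "(s powr b) powr (1 / b) = s" using b sp by (simp add: powr_powr)
      ultimately show ?thesis by (simp add: S_def s_def)
    qed
  qed
qed



theorem theorem1p1:
  fixes f f' u0 :: "real \<Rightarrow> real" and u :: "real \<Rightarrow> real \<Rightarrow> real"
    and s0 K \<alpha> r \<beta> x0 \<mu> :: real
  assumes f_C1: "C1_on_unit f f'"
    and f0: "f 0 = 0" and f1: "f 1 = 0"
    and fpos: "\<forall>s. 0 < s \<and> s < 1 \<longrightarrow> f s > 0"
    and fder1: "f' 1 < 0"
    and s0: "0 < s0" "s0 < 1" and K: "K \<ge> 0" and alpha: "\<alpha> > 0" and r: "r > 0"
    and f_upper: "\<forall>s. 0 < s \<and> s < 1 \<longrightarrow> f s \<le> r * s / (1 + \<bar>ln s\<bar>) powr \<alpha>"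
    and f_lower: "\<forall>s. 0 < s \<and> s \<le> s0 \<longrightarrow> f s \<ge> r * s / (1 + \<bar>ln s\<bar>) powr \<alpha> * (1 - K * s)"
    and u0_uc: "uniformly_continuous_on UNIV u0"
    and u0_range: "\<forall>x. 0 \<le> u0 x \<and> u0 x \<le> 1"
    and u0_pos: "\<forall>x. u0 x > 0"
    and u0_left: "\<exists>\<delta>>0. eventually (\<lambda>x. u0 x \<ge> \<delta>) at_bot"
    and u0_right: "(u0 \<longlongrightarrow> 0) at_top"
    and beta: "\<beta> > 0" "\<beta> \<ge> 1 / (\<alpha> + 1)"
    and x0: "x0 > 0" and mu: "\<mu> > 0"
    and u0_decay: "\<exists>C>0. \<forall>x\<ge>x0. u0 x \<le> C * exp (- \<mu> * x powr \<beta>)"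
    and sol: "is_solution f u0 u"
  shows "\<forall>lv. 0 < lv \<and> lv < 1 \<longrightarrow>
           (\<exists>\<Gamma>>0. \<exists>c>0. \<exists>T. \<forall>t>T.
              upper_level_set u lv t \<noteq> {} \<and> bdd_above (upper_level_set u lv t) \<and>
              \<Gamma> < level_pos u lv t / t \<and> level_pos u lv t / t < c)"
proof (intro allI impI)
  fix lv :: real assume lv: "0 < lv \<and> lv < 1"
  have fd: "\<And>s. s \<in> {0..1} \<Longrightarrow> (f has_real_derivative f' s) (at s within {0..1})"
    and f'c: "continuous_on {0..1} f'" using f_C1 unfolding C1_on_unit_def by auto
  have fcont: "continuous_on {0..1} f" using fd by (rule DERIV_continuous_on)
  obtain B where B: "\<forall>s\<in>{0..1}. norm (f' s) \<le> B"
    using compact_imp_bounded[OF compact_continuous_image[OF f'c compact_Icc]]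
    unfolding bounded_iff by auto
  have B0: "B \<ge> 0" using B by (metis atLeastAtMost_iff norm_ge_zero order_trans zero_le_one order_refl)
  have Lip: "\<forall>a b. 0 \<le> b \<and> b \<le> a \<and> a \<le> 1 \<longrightarrow> f a - f b \<le> B * (a - b)"
  proof (intro allI impI)
    fix a b :: real assume ab: "0 \<le> b \<and> b \<le> a \<and> a \<le> 1"
    have "norm (f a - f b) \<le> B * norm (a - b)"
      by (rule field_differentiable_bound[OF convex_real_interval(5) fd]) (use B ab in auto)
    thus "f a - f b \<le> B * (a - b)" using ab by simp
  qed
  have fnn: "\<forall>s. 0 \<le> s \<and> s \<le> 1 \<longrightarrow> f s \<ge> 0"
  proof (intro allI impI)
    fix s :: real assume "0 \<le> s \<and> s \<le> 1"
    thus "f s \<ge> 0" using fpos f0 f1 by (cases "s = 0"; cases "s = 1") (auto simp: less_imp_le)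
  qed
  obtain \<delta> where dp: "\<delta> > 0" and ev: "eventually (\<lambda>x. u0 x \<ge> \<delta>) at_bot" using u0_left by blast
  obtain l0 where left: "\<forall>x\<le>l0. u0 x \<ge> \<delta>" using ev unfolding eventually_at_bot_linorder by blast
  obtain \<Gamma> T1 where G: "\<Gamma> > 0" and T1: "\<forall>t>T1. \<exists>x. u t x \<ge> lv \<and> x > \<Gamma> * t"
    using lower_bound[OF Lip B0 fcont fnn fpos sol left dp] lv by blast
  obtain c S where c: "c > 0" and S: "\<forall>t\<ge>0. \<forall>x. u t x \<ge> lv \<longrightarrow> x \<le> c * t + S"
    using upper_bound[OF Lip B0 sol f_upper alpha r beta x0 mu u0_decay] lv by blast
  define T where "T = max T1 (max 0 (\<bar>S\<bar> / c))"
  show "\<exists>\<Gamma>>0. \<exists>c>0. \<exists>T. \<forall>t>T.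
              upper_level_set u lv t \<noteq> {} \<and> bdd_above (upper_level_set u lv t) \<and>
              \<Gamma> < level_pos u lv t / t \<and> level_pos u lv t / t < c"
  proof (rule exI[of _ \<Gamma>], rule conjI[OF G], rule exI[of _ "2 * c"], rule conjI, simp add: c,
      rule exI[of _ T], intro allI impI)
    fix t assume tT: "t > T"
    have t0: "t > 0" and tT1: "t > T1" and tS: "t > \<bar>S\<bar> / c" using tT by (auto simp: T_def)
    obtain x where x: "u t x \<ge> lv" "x > \<Gamma> * t" using T1 tT1 by blast
    have xin: "x \<in> upper_level_set u lv t" using x by (simp add: upper_level_set_def)
    have ub: "\<forall>y\<in>upper_level_set u lv t. y \<le> c * t + S" using S t0 by (simp add: upper_level_set_def)
    have bdd: "bdd_above (upper_level_set u lv t)" using ub by (auto simp: bdd_above_def)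
    have ne: "upper_level_set u lv t \<noteq> {}" using xin by auto
    have "x \<le> level_pos u lv t" unfolding level_pos_def using xin bdd by (rule cSup_upper)
    hence low: "\<Gamma> * t < level_pos u lv t" using x by linarith
    have "level_pos u lv t \<le> c * t + S" unfolding level_pos_def using ne ub by (intro cSup_least) auto
    moreover have "S < c * t" using tS c by (simp add: divide_less_eq mult.commute)
    ultimately have up: "level_pos u lv t < 2 * c * t" by linarith
    show "upper_level_set u lv t \<noteq> {} \<and> bdd_above (upper_level_set u lv t) \<and>
              \<Gamma> < level_pos u lv t / t \<and> level_pos u lv t / t < 2 * c"
      using ne bdd low up t0 by (simp add: less_divide_eq divide_less_eq)
  qed
qed

end
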